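(* Let $(G,\cdot,\curlywedge,\xi,\delta)$ satisfy the standing assumptions below. For every subset $H\subseteq G$, every natural number $n>1$ and every $z\in G$, we have $z\in F_\xi^{\,n}(H)$ if and only if there exist $x_i,y_i,t_i\in G^*$ and $u_i,v_i\in G$ ($1\le i\le 2^n-1$) such that: (a) $u_1\downarrow v_1$ and $(u_1\curlywedge v_1)x_1\boxdot y_1\leqslant zt_1$; (b) for every $i$ with $1\le i\le 2^{n-1}-1$: $u_{2i}\downarrow v_{2i}$, $(u_{2i}\curlywedge v_{2i})x_{2i}\boxdot y_{2i}\leqslant u_it_{2i}$, $u_{2i+1}\downarrow v_{2i+1}$ and $(u_{2i+1}\curlywedge v_{2i+1})x_{2i+1}\boxdot y_{2i+1}\leqslant v_ix_it_{2i+1}$; (c) for every $i$ with $2^{n-1}\le i\le 2^n-1$: $u_i\in H$ and $v_ix_i\in H$.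
   Context: Standing assumptions: $(G,\cdot)$ is a semigroup, $(G,\curlywedge)$ a semilattice on $G$, $\xi,\delta\subseteq G\times G$. Write $x\leqslant y$ iff $x\curlywedge y=x$ (semilattice order $\zeta$), $x\downarrow y$ iff $(x,y)\in\xi$, $x\vdash y$ iff $(x,y)\in\delta$. Assume $\xi$ is left regular ($(u,v)\in\xi\Rightarrow(xu,xv)\in\xi$), $\zeta\subseteq\xi$, $\delta$ is a left ideal ($(x,y)\in\delta\Rightarrow(ux,y)\in\delta$), and for all $x,y,z,u,v\in G$: $x(y\curlywedge z)=xy\curlywedge xz$; $x\leqslant y\wedge u\leqslant v\wedge y\downarrow v\Rightarrow u\downarrow x$; $x\downarrow y\Rightarrow(x\curlywedge y)u=xu\curlywedge yu$. $G^*=G\cup\{e\}$ is $(G,\cdot)$ with a new identity $e$ adjoined, with conventions $e\leqslant e$, $e\vdash e$, $x\vdash e$ for all $x\in G$. $a\boxdot b\leqslant c$ abbreviates $a\vdash b\wedge ab\leqslant c$. For $H\subseteq G$, $F_\xi(H)=\{z\in G:\exists u,v\in G,\ \exists x,y,t\in G^*$ with $u\downarrow v$, $(u\curlywedge v)x\boxdot y\leqslant zt$, $u\in H$, $vx\in H\}$; $F_\xi^{\,0}(H)=H$ and $F_\xi^{\,n}(H)=F_\xi(F_\xi^{\,n-1}(H))$ for $n\ge1$. *)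

theory Defs
  imports Main
begin

text \<open>G is modelled by a type 'a; G* = G \<union> {e} by 'a option, with None playing e.\<close>

fun mults :: "('a \<Rightarrow> 'a \<Rightarrow> 'a) \<Rightarrow> 'a option \<Rightarrow> 'a option \<Rightarrow> 'a option" where
  "mults m None y = y"
| "mults m (Some a) None = Some a"
| "mults m (Some a) (Some b) = Some (m a b)"

fun les :: "('a \<Rightarrow> 'a \<Rightarrow> 'a) \<Rightarrow> 'a option \<Rightarrow> 'a option \<Rightarrow> bool" where
  "les w (Some a) (Some b) = (w a b = a)"
| "les w None None = True"
| "les w _ _ = False"

fun vds :: "('a \<times> 'a) set \<Rightarrow> 'a option \<Rightarrow> 'a option \<Rightarrow> bool" where
  "vds d _ None = True"
| "vds d (Some a) (Some b) = ((a, b) \<in> d)"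
| "vds d None (Some b) = False"

text \<open>a \<boxdot> b \<le> c  abbreviates  a |- b and ab \<le> c.\<close>
definition boxle :: "('a \<Rightarrow> 'a \<Rightarrow> 'a) \<Rightarrow> ('a \<Rightarrow> 'a \<Rightarrow> 'a) \<Rightarrow> ('a \<times> 'a) set
    \<Rightarrow> 'a option \<Rightarrow> 'a option \<Rightarrow> 'a option \<Rightarrow> bool" where
  "boxle m w d a b c \<longleftrightarrow> vds d a b \<and> les w (mults m a b) c"

definition Fxi :: "('a \<Rightarrow> 'a \<Rightarrow> 'a) \<Rightarrow> ('a \<Rightarrow> 'a \<Rightarrow> 'a) \<Rightarrow> ('a \<times> 'a) set \<Rightarrow> ('a \<times> 'a) set
    \<Rightarrow> 'a set \<Rightarrow> 'a set" where
  "Fxi m w xi d H = {z. \<exists>u v x y t. (u, v) \<in> xi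
      \<and> boxle m w d (mults m (Some (w u v)) x) y (mults m (Some z) t)
      \<and> u \<in> H \<and> mults m (Some v) x \<in> Some ` H}"

end

theory Submission
  imports Defs
begin


definition nd where
  "nd m w xi d c u v x y t \<longleftrightarrow> (u, v) \<in> xi \<and> boxle m w d (mults m (Some (w u v)) x) y (mults m c t)"

definition PP where
  "PP m w xi d n H z \<longleftrightarrow> (\<exists>(x::nat \<Rightarrow> 'a option) (y::nat \<Rightarrow> 'a option) (t::nat \<Rightarrow> 'a option)
       (u::nat \<Rightarrow> 'a) (v::nat \<Rightarrow> 'a).
      nd m w xi d (Some z) (u 1) (v 1) (x 1) (y 1) (t 1)
      \<and> (\<forall>i. 1 \<le> i \<and> i \<le> 2 ^ (n - 1) - 1 \<longrightarrow>
            nd m w xi d (Some (u i)) (u (2*i)) (v (2*i)) (x (2*i)) (y (2*i)) (t (2*i))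
          \<and> nd m w xi d (mults m (Some (v i)) (x i)) (u (2*i+1)) (v (2*i+1)) (x (2*i+1)) (y (2*i+1)) (t (2*i+1)))
      \<and> (\<forall>i. 2 ^ (n - 1) \<le> i \<and> i \<le> 2 ^ n - 1 \<longrightarrow>
            u i \<in> H \<and> mults m (Some (v i)) (x i) \<in> Some ` H))"

lemma mults_Some: "\<exists>b. mults m (Some a) x = Some b"
  by (cases x) auto

lemma Fxi_nd: "z \<in> Fxi m w xi d H \<longleftrightarrow>
  (\<exists>u v x y t. nd m w xi d (Some z) u v x y t \<and> u \<in> H \<and> mults m (Some v) x \<in> Some ` H)"
  unfolding Fxi_def nd_def by blast

lemma Fxi_nd2: "mults m (Some a) x0 \<in> Some ` Fxi m w xi d H \<longleftrightarrow>
  (\<exists>u v x y t. nd m w xi d (mults m (Some a) x0) u v x y t \<and> u \<in> H \<and> mults m (Some v) x \<in> Some ` H)"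
proof -
  obtain b where b: "mults m (Some a) x0 = Some b" using mults_Some[of m a x0] by blast
  show ?thesis unfolding b using Fxi_nd[of b m w xi d H] by blast
qed

lemma PP1: "PP m w xi d 1 H z \<longleftrightarrow> z \<in> Fxi m w xi d H"
proof
  assume "PP m w xi d 1 H z"
  then show "z \<in> Fxi m w xi d H" unfolding PP_def Fxi_nd by force
next
  assume "z \<in> Fxi m w xi d H"
  then obtain u v x y t where "nd m w xi d (Some z) u v x y t" "u \<in> H" "mults m (Some v) x \<in> Some ` H"
    unfolding Fxi_nd by blast
  then show "PP m w xi d 1 H z" unfolding PP_def
    apply (rule_tac x="\<lambda>_. x" in exI, rule_tac x="\<lambda>_. y" in exI, rule_tac x="\<lambda>_. t" in exI,
           rule_tac x="\<lambda>_. u" in exI, rule_tac x="\<lambda>_. v" in exI)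
    by auto
qed

lemma PPstep:
  assumes n: "n \<ge> 1"
  shows "PP m w xi d (Suc n) H z \<longleftrightarrow> PP m w xi d n (Fxi m w xi d H) z"
proof -
  have p: "(2::nat) ^ n = 2 * 2 ^ (n - 1)" using n by (cases n) auto
  show ?thesis
  proof
    assume "PP m w xi d (Suc n) H z"
    then obtain x y t u v where
      r: "nd m w xi d (Some z) (u 1) (v 1) (x 1) (y 1) (t 1)"
      and b: "\<And>i::nat. 1 \<le> i \<Longrightarrow> i \<le> 2 ^ n - 1 \<Longrightarrow>
            nd m w xi d (Some (u i)) (u (2*i)) (v (2*i)) (x (2*i)) (y (2*i)) (t (2*i))
          \<and> nd m w xi d (mults m (Some (v i)) (x i)) (u (2*i+1)) (v (2*i+1)) (x (2*i+1)) (y (2*i+1)) (t (2*i+1))"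
      and l: "\<And>i::nat. 2 ^ n \<le> i \<Longrightarrow> i \<le> 2 ^ Suc n - 1 \<Longrightarrow>
            u i \<in> H \<and> mults m (Some (v i)) (x i) \<in> Some ` H"
      unfolding PP_def by auto
    show "PP m w xi d n (Fxi m w xi d H) z" unfolding PP_def
    proof (intro exI conjI allI impI)
      show "nd m w xi d (Some z) (u 1) (v 1) (x 1) (y 1) (t 1)" by (rule r)
    next
      fix i :: nat assume i: "1 \<le> i \<and> i \<le> 2 ^ (n - 1) - 1"
      then have "i \<le> 2 ^ n - 1" using p by linarith
      then show "nd m w xi d (Some (u i)) (u (2*i)) (v (2*i)) (x (2*i)) (y (2*i)) (t (2*i))"
           "nd m w xi d (mults m (Some (v i)) (x i)) (u (2*i+1)) (v (2*i+1)) (x (2*i+1)) (y (2*i+1)) (t (2*i+1))"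
        using b i by auto
    next
      fix i :: nat assume i: "2 ^ (n - 1) \<le> i \<and> i \<le> 2 ^ n - 1"
      have i1: "1 \<le> i" using i by (metis le_trans one_le_numeral one_le_power)
      have i2: "i \<le> 2 ^ n - 1" using i by simp
      have pos: "(0::nat) < 2 ^ (n - 1)" by simp
      have q: "(2::nat) ^ Suc n = 2 * 2 ^ n" by simp
      have r1: "2 * i + 1 \<le> 2 ^ Suc n - 1" "2 ^ n \<le> 2 * i" using i p pos q by linarith+
      have l1: "u (2*i) \<in> H \<and> mults m (Some (v (2*i))) (x (2*i)) \<in> Some ` H"
        by (rule l) (use r1 in auto)
      have l2: "u (2*i+1) \<in> H \<and> mults m (Some (v (2*i+1))) (x (2*i+1)) \<in> Some ` H"
        by (rule l) (use r1 in auto)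
      show "u i \<in> Fxi m w xi d H"
        unfolding Fxi_nd using b[OF i1 i2] l1 by blast
      show "mults m (Some (v i)) (x i) \<in> Some ` Fxi m w xi d H"
        unfolding Fxi_nd2 using b[OF i1 i2] l2 by blast
    qed
  next
    assume "PP m w xi d n (Fxi m w xi d H) z"
    then obtain x y t u v where
      r: "nd m w xi d (Some z) (u 1) (v 1) (x 1) (y 1) (t 1)"
      and b: "\<And>i::nat. 1 \<le> i \<Longrightarrow> i \<le> 2 ^ (n - 1) - 1 \<Longrightarrow>
            nd m w xi d (Some (u i)) (u (2*i)) (v (2*i)) (x (2*i)) (y (2*i)) (t (2*i))
          \<and> nd m w xi d (mults m (Some (v i)) (x i)) (u (2*i+1)) (v (2*i+1)) (x (2*i+1)) (y (2*i+1)) (t (2*i+1))"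
      and l: "\<And>i::nat. 2 ^ (n - 1) \<le> i \<Longrightarrow> i \<le> 2 ^ n - 1 \<Longrightarrow>
            u i \<in> Fxi m w xi d H \<and> mults m (Some (v i)) (x i) \<in> Some ` Fxi m w xi d H"
      unfolding PP_def by auto
    have "\<forall>i::nat. \<exists>a b c e f. 2 ^ (n - 1) \<le> i \<and> i \<le> 2 ^ n - 1 \<longrightarrow>
       nd m w xi d (Some (u i)) a b c e f \<and> a \<in> H \<and> mults m (Some b) c \<in> Some ` H"
      using l unfolding Fxi_nd by blast
    then obtain A1 B1 C1 E1 F1 where c1: "\<And>i::nat. 2 ^ (n - 1) \<le> i \<Longrightarrow> i \<le> 2 ^ n - 1 \<Longrightarrow>
       nd m w xi d (Some (u i)) (A1 i) (B1 i) (C1 i) (E1 i) (F1 i) \<and> A1 i \<in> H \<and> mults m (Some (B1 i)) (C1 i) \<in> Some ` H"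
      by metis
    have "\<forall>i::nat. \<exists>a b c e f. 2 ^ (n - 1) \<le> i \<and> i \<le> 2 ^ n - 1 \<longrightarrow>
       nd m w xi d (mults m (Some (v i)) (x i)) a b c e f \<and> a \<in> H \<and> mults m (Some b) c \<in> Some ` H"
      using l unfolding Fxi_nd2 by blast
    then obtain A2 B2 C2 E2 F2 where c2: "\<And>i::nat. 2 ^ (n - 1) \<le> i \<Longrightarrow> i \<le> 2 ^ n - 1 \<Longrightarrow>
       nd m w xi d (mults m (Some (v i)) (x i)) (A2 i) (B2 i) (C2 i) (E2 i) (F2 i) \<and> A2 i \<in> H \<and> mults m (Some (B2 i)) (C2 i) \<in> Some ` H"
      by metis
    define N where "N = (2::nat) ^ n"
    define u' where "u' j = (if j < N then u j else if even j then A1 (j div 2) else A2 (j div 2))" for j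
    define v' where "v' j = (if j < N then v j else if even j then B1 (j div 2) else B2 (j div 2))" for j
    define x' where "x' j = (if j < N then x j else if even j then C1 (j div 2) else C2 (j div 2))" for j
    define y' where "y' j = (if j < N then y j else if even j then E1 (j div 2) else E2 (j div 2))" for j
    define t' where "t' j = (if j < N then t j else if even j then F1 (j div 2) else F2 (j div 2))" for j
    have pos0: "(0::nat) < 2 ^ (n - 1)" by simp
    have N1: "1 < N" unfolding N_def using p pos0 by linarith
    show "PP m w xi d (Suc n) H z" unfolding PP_def
    proof (rule exI[of _ x'], rule exI[of _ y'], rule exI[of _ t'], rule exI[of _ u'], rule exI[of _ v'],
        intro conjI allI impI)
      show "nd m w xi d (Some z) (u' 1) (v' 1) (x' 1) (y' 1) (t' 1)"
        using r N1 unfolding u'_def v'_def x'_def y'_def t'_def by simp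
    next
      fix i :: nat assume i: "1 \<le> i \<and> i \<le> 2 ^ (Suc n - 1) - 1"
      then have iN: "i < N" using N1 unfolding N_def by simp linarith
      have AB: "nd m w xi d (Some (u' i)) (u' (2*i)) (v' (2*i)) (x' (2*i)) (y' (2*i)) (t' (2*i))
          \<and> nd m w xi d (mults m (Some (v' i)) (x' i)) (u' (2*i+1)) (v' (2*i+1)) (x' (2*i+1)) (y' (2*i+1)) (t' (2*i+1))"
      proof (cases "i \<le> 2 ^ (n - 1) - 1")
        case True
        have "2*i+1 < N" using True p i pos0 unfolding N_def by linarith
        then show ?thesis using b[OF _ True] i iN unfolding u'_def v'_def x'_def y'_def t'_def by simp
      next
        case False
        then have "2 ^ (n - 1) \<le> i" by simp
        moreover have "i \<le> 2 ^ n - 1" using iN N_def by simp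
        moreover have "\<not> 2*i < N" "\<not> 2*i+1 < N" using False p pos0 unfolding N_def by linarith+
        ultimately show ?thesis using c1 c2 iN unfolding u'_def v'_def x'_def y'_def t'_def by simp
      qed
      then show "nd m w xi d (Some (u' i)) (u' (2*i)) (v' (2*i)) (x' (2*i)) (y' (2*i)) (t' (2*i))" "nd m w xi d (mults m (Some (v' i)) (x' i)) (u' (2*i+1)) (v' (2*i+1)) (x' (2*i+1)) (y' (2*i+1)) (t' (2*i+1))" by auto
    next
      fix j :: nat assume j: "2 ^ (Suc n - 1) \<le> j \<and> j \<le> 2 ^ Suc n - 1"
      then have jN: "\<not> j < N" unfolding N_def by simp
      have q: "(2::nat) ^ Suc n = 2 * 2 ^ n" by simp
      have a: "2 ^ (n - 1) \<le> j div 2" using j p by auto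
      have bb: "j div 2 \<le> 2 ^ n - 1" using j p q pos0 by linarith
      show "u' j \<in> H" "mults m (Some (v' j)) (x' j) \<in> Some ` H"
        using c1[OF a bb] c2[OF a bb] jN unfolding u'_def v'_def x'_def by auto
    qed
  qed
qed

lemma PPall: "n \<ge> 1 \<Longrightarrow> PP m w xi d n H z \<longleftrightarrow> z \<in> (Fxi m w xi d ^^ n) H"
proof (induction n arbitrary: H z rule: nat_induct_at_least)
  case base
  then show ?case using PP1 by simp
next
  case (Suc n)
  have "PP m w xi d (Suc n) H z = PP m w xi d n (Fxi m w xi d H) z" by (rule PPstep[OF Suc(1)])
  also have "\<dots> = (z \<in> (Fxi m w xi d ^^ n) (Fxi m w xi d H))" by (rule Suc.IH)
  also have "\<dots> = (z \<in> (Fxi m w xi d ^^ Suc n) H)" by (simp only: funpow_Suc_right comp_def)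
  finally show ?case .
qed

theorem proposition6:

  fixes m :: "'a \<Rightarrow> 'a \<Rightarrow> 'a" and w :: "'a \<Rightarrow> 'a \<Rightarrow> 'a"
    and xi :: "('a \<times> 'a) set" and d :: "('a \<times> 'a) set"
  assumes m_assoc: "\<And>a b c. m (m a b) c = m a (m b c)"
    and w_assoc: "\<And>a b c. w (w a b) c = w a (w b c)"
    and w_comm: "\<And>a b. w a b = w b a"
    and w_idem: "\<And>a. w a a = a"
    and xi_leftreg: "\<And>u v x. (u, v) \<in> xi \<Longrightarrow> (m x u, m x v) \<in> xi"
    and zeta_xi: "\<And>x y. w x y = x \<Longrightarrow> (x, y) \<in> xi"
    and d_leftideal: "\<And>x y u. (x, y) \<in> d \<Longrightarrow> (m u x, y) \<in> d"
    and distl: "\<And>x y z. m x (w y z) = w (m x y) (m x z)"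
    and ax2: "\<And>x y u v. w x y = x \<Longrightarrow> w u v = u \<Longrightarrow> (y, v) \<in> xi \<Longrightarrow> (u, x) \<in> xi"
    and ax3: "\<And>x y u. (x, y) \<in> xi \<Longrightarrow> m (w x y) u = w (m x u) (m y u)"
    and n: "n > (1::nat)"
  shows "z \<in> (Fxi m w xi d ^^ n) H \<longleftrightarrow>
    (\<exists>(x::nat \<Rightarrow> 'a option) (y::nat \<Rightarrow> 'a option) (t::nat \<Rightarrow> 'a option)
       (u::nat \<Rightarrow> 'a) (v::nat \<Rightarrow> 'a).
      (u 1, v 1) \<in> xi
      \<and> boxle m w d (mults m (Some (w (u 1) (v 1))) (x 1)) (y 1) (mults m (Some z) (t 1))
      \<and> (\<forall>i. 1 \<le> i \<and> i \<le> 2 ^ (n - 1) - 1 \<longrightarrow>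
            (u (2*i), v (2*i)) \<in> xi
          \<and> boxle m w d (mults m (Some (w (u (2*i)) (v (2*i)))) (x (2*i))) (y (2*i))
                (mults m (Some (u i)) (t (2*i)))
          \<and> (u (2*i+1), v (2*i+1)) \<in> xi
          \<and> boxle m w d (mults m (Some (w (u (2*i+1)) (v (2*i+1)))) (x (2*i+1))) (y (2*i+1))
                (mults m (mults m (Some (v i)) (x i)) (t (2*i+1))))
      \<and> (\<forall>i. 2 ^ (n - 1) \<le> i \<and> i \<le> 2 ^ n - 1 \<longrightarrow>
            u i \<in> H \<and> mults m (Some (v i)) (x i) \<in> Some ` H))"
    using PPall[of n m w xi d H z] n unfolding PP_def nd_def by simp

end
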